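(* Let $n\in\mathbb{N}$ and $b_{n,i}(x)=\binom ni x^i(1-x)^{n-i}$ for $i=0,1,\dots,n$. Then \[ \sum_{i,j=0}^n\bigl(b_{n,i}(x)b_{n,j}(x)+b_{n,i}(y)b_{n,j}(y)-2b_{n,i}(x)b_{n,j}(y)\bigr)f\Bigl(\frac{i+j}{2n}\Bigr)\ge 0 \] for every convex continuous function $f:[0,1]\to\mathbb{R}$ and all $x,y\in[0,1]$. *)

theory Defs
  imports "HOL-Analysis.Analysis"
begin

definition bern :: "nat \<Rightarrow> nat \<Rightarrow> real \<Rightarrow> real" where
  "bern n i x = real (n choose i) * x ^ i * (1 - x) ^ (n - i)"

end

theory Submission
  imports Defs
begin

lemma four_pt:
  fixes f :: "real \<Rightarrow> real"
  assumes cv: "convex_on {0..1} f" and "0 \<le> a" "a \<le> b" "b \<le> d" "d \<le> 1" "a \<le> c" "c \<le> d" "a + d = b + c"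
  shows "f b + f c \<le> f a + f d"
proof (cases "a = d")
  case True then show ?thesis using assms by auto
next
  case False
  then have dp: "d - a > 0" using assms by auto
  have cv2: "convex_on {a..d} f" by (rule convex_on_subset[OF cv]) (use assms in auto)
  have 1: "f b \<le> (f d - f a) / (d - a) * (b - a) + f a"
    using convex_onD_Icc'[OF cv2, of b] assms by auto
  have 2: "f c \<le> (f d - f a) / (d - a) * (c - a) + f a"
    using convex_onD_Icc'[OF cv2, of c] assms by auto
  have "(f d - f a) / (d - a) * (b - a) + (f d - f a) / (d - a) * (c - a) = (f d - f a) / (d - a) * ((b - a) + (c - a))"
    by (simp only: distrib_left)
  also have "\<dots> = (f d - f a) / (d - a) * (d - a)"
  proof -
    have "(b - a) + (c - a) = d - a" using assms by linarith
    then show ?thesis by (simp only:)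
  qed
  also have "\<dots> = f d - f a" using dp by simp
  finally show ?thesis using 1 2 by linarith
qed

lemma coupling_sum:
  fixes p :: "nat \<Rightarrow> nat \<Rightarrow> real" and B C :: "nat \<Rightarrow> real" and g :: "nat \<Rightarrow> real"
  assumes m1: "\<And>i. i \<le> n \<Longrightarrow> (\<Sum>k\<le>n. p i k) = B i"
    and m2: "\<And>k. k \<le> n \<Longrightarrow> (\<Sum>i\<le>n. p i k) = C k"
  shows "(\<Sum>i\<le>n. \<Sum>j\<le>n. (B i * B j + C i * C j - 2 * B i * C j) * g (i + j))
    = (\<Sum>i\<le>n. \<Sum>k\<le>n. \<Sum>j\<le>n. \<Sum>l\<le>n. p i k * p j l * (g (i+j) + g (k+l) - g (i+l) - g (j+k)))"
proof -
  have e1: "(\<Sum>i\<le>n. \<Sum>k\<le>n. \<Sum>j\<le>n. \<Sum>l\<le>n. p i k * p j l * g (i+j)) = (\<Sum>i\<le>n. \<Sum>j\<le>n. B i * B j * g (i+j))"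
  proof -
    have "(\<Sum>i\<le>n. \<Sum>k\<le>n. \<Sum>j\<le>n. \<Sum>l\<le>n. p i k * p j l * g (i+j)) = (\<Sum>i\<le>n. \<Sum>k\<le>n. \<Sum>j\<le>n. p i k * B j * g (i+j))"
      by (intro sum.cong refl) (simp add: m1 sum_distrib_left[symmetric] sum_distrib_right[symmetric] mult.commute mult.left_commute)
    also have "\<dots> = (\<Sum>i\<le>n. \<Sum>j\<le>n. \<Sum>k\<le>n. p i k * B j * g (i+j))"
      by (intro sum.cong refl sum.swap)
    also have "\<dots> = (\<Sum>i\<le>n. \<Sum>j\<le>n. B i * B j * g (i+j))"
      by (intro sum.cong refl) (simp add: m1 sum_distrib_right[symmetric])
    finally show ?thesis .
  qed
  have e2: "(\<Sum>i\<le>n. \<Sum>k\<le>n. \<Sum>j\<le>n. \<Sum>l\<le>n. p i k * p j l * g (k+l)) = (\<Sum>k\<le>n. \<Sum>l\<le>n. C k * C l * g (k+l))"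
  proof -
    have "(\<Sum>i\<le>n. \<Sum>k\<le>n. \<Sum>j\<le>n. \<Sum>l\<le>n. p i k * p j l * g (k+l)) = (\<Sum>k\<le>n. \<Sum>i\<le>n. \<Sum>l\<le>n. \<Sum>j\<le>n. p i k * p j l * g (k+l))"
      by (subst sum.swap) (intro sum.cong refl sum.swap)
    also have "\<dots> = (\<Sum>k\<le>n. \<Sum>i\<le>n. \<Sum>l\<le>n. p i k * C l * g (k+l))"
      by (intro sum.cong refl) (simp add: m2 sum_distrib_left[symmetric] sum_distrib_right[symmetric] mult.commute mult.left_commute)
    also have "\<dots> = (\<Sum>k\<le>n. \<Sum>l\<le>n. \<Sum>i\<le>n. p i k * C l * g (k+l))"
      by (intro sum.cong refl sum.swap)
    also have "\<dots> = (\<Sum>k\<le>n. \<Sum>l\<le>n. C k * C l * g (k+l))"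
      by (intro sum.cong refl) (simp add: m2 sum_distrib_right[symmetric])
    finally show ?thesis .
  qed
  have e3: "(\<Sum>i\<le>n. \<Sum>k\<le>n. \<Sum>j\<le>n. \<Sum>l\<le>n. p i k * p j l * g (i+l)) = (\<Sum>i\<le>n. \<Sum>l\<le>n. B i * C l * g (i+l))"
  proof -
    have "(\<Sum>i\<le>n. \<Sum>k\<le>n. \<Sum>j\<le>n. \<Sum>l\<le>n. p i k * p j l * g (i+l)) = (\<Sum>i\<le>n. \<Sum>k\<le>n. \<Sum>l\<le>n. \<Sum>j\<le>n. p i k * p j l * g (i+l))"
      by (intro sum.cong refl sum.swap)
    also have "\<dots> = (\<Sum>i\<le>n. \<Sum>k\<le>n. \<Sum>l\<le>n. p i k * C l * g (i+l))"
      by (intro sum.cong refl) (simp add: m2 sum_distrib_left[symmetric] sum_distrib_right[symmetric] mult.commute mult.left_commute)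
    also have "\<dots> = (\<Sum>i\<le>n. \<Sum>l\<le>n. \<Sum>k\<le>n. p i k * C l * g (i+l))"
      by (intro sum.cong refl sum.swap)
    also have "\<dots> = (\<Sum>i\<le>n. \<Sum>l\<le>n. B i * C l * g (i+l))"
      by (intro sum.cong refl) (simp add: m1 sum_distrib_right[symmetric])
    finally show ?thesis .
  qed
  have e4: "(\<Sum>i\<le>n. \<Sum>k\<le>n. \<Sum>j\<le>n. \<Sum>l\<le>n. p i k * p j l * g (j+k)) = (\<Sum>i\<le>n. \<Sum>l\<le>n. B i * C l * g (i+l))"
  proof -
    have "(\<Sum>i\<le>n. \<Sum>k\<le>n. \<Sum>j\<le>n. \<Sum>l\<le>n. p i k * p j l * g (j+k)) = (\<Sum>i\<le>n. \<Sum>j\<le>n. \<Sum>k\<le>n. \<Sum>l\<le>n. p i k * p j l * g (j+k))"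
      by (intro sum.cong refl sum.swap)
    also have "\<dots> = (\<Sum>j\<le>n. \<Sum>i\<le>n. \<Sum>k\<le>n. \<Sum>l\<le>n. p i k * p j l * g (j+k))"
      by (rule sum.swap)
    also have "\<dots> = (\<Sum>j\<le>n. \<Sum>i\<le>n. \<Sum>l\<le>n. \<Sum>k\<le>n. p i k * p j l * g (j+k))"
      by (intro sum.cong refl sum.swap)
    also have "\<dots> = (\<Sum>j\<le>n. \<Sum>l\<le>n. \<Sum>i\<le>n. \<Sum>k\<le>n. p i k * p j l * g (j+k))"
      by (intro sum.cong refl sum.swap)
    also have "\<dots> = (\<Sum>i\<le>n. \<Sum>k\<le>n. \<Sum>j\<le>n. \<Sum>l\<le>n. p i k * p j l * g (i+l))"
      by (simp add: mult.commute)
    also have "\<dots> = (\<Sum>i\<le>n. \<Sum>l\<le>n. B i * C l * g (i+l))" by (rule e3)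
    finally show ?thesis .
  qed
  have "(\<Sum>i\<le>n. \<Sum>k\<le>n. \<Sum>j\<le>n. \<Sum>l\<le>n. p i k * p j l * (g (i+j) + g (k+l) - g (i+l) - g (j+k)))
    = (\<Sum>i\<le>n. \<Sum>k\<le>n. \<Sum>j\<le>n. \<Sum>l\<le>n. p i k * p j l * g (i+j))
    + (\<Sum>i\<le>n. \<Sum>k\<le>n. \<Sum>j\<le>n. \<Sum>l\<le>n. p i k * p j l * g (k+l))
    - (\<Sum>i\<le>n. \<Sum>k\<le>n. \<Sum>j\<le>n. \<Sum>l\<le>n. p i k * p j l * g (i+l))
    - (\<Sum>i\<le>n. \<Sum>k\<le>n. \<Sum>j\<le>n. \<Sum>l\<le>n. p i k * p j l * g (j+k))"
    by (simp only: sum.distrib sum_subtractf distrib_left right_diff_distrib)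
  also have "\<dots> = (\<Sum>i\<le>n. \<Sum>j\<le>n. (B i * B j + C i * C j - 2 * B i * C j) * g (i + j))"
    unfolding e1 e2 e3 e4
    by (simp add: sum.distrib sum_subtractf algebra_simps sum_distrib_left)
  finally show ?thesis by simp
qed

lemma g_four:
  fixes f :: "real \<Rightarrow> real"
  assumes cv: "convex_on {0..1} f" and "i \<le> k" "k \<le> n" "j \<le> l" "l \<le> n"
  shows "f (real (i+l) / (2 * real n)) + f (real (j+k) / (2 * real n))
     \<le> f (real (i+j) / (2 * real n)) + f (real (k+l) / (2 * real n))"
proof (cases "n = 0")
  case True then show ?thesis using assms by simp
next
  case False
  then have np: "(2 * real n) > 0" by simp
  show ?thesis
  proof (rule four_pt[OF cv])
    show "0 \<le> real (i + j) / (2 * real n)" using np by simp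
    show "real (i + j) / (2 * real n) \<le> real (i + l) / (2 * real n)"
      using np assms by (intro divide_right_mono) auto
    show "real (i + l) / (2 * real n) \<le> real (k + l) / (2 * real n)"
      using np assms by (intro divide_right_mono) auto
    show "real (i + j) / (2 * real n) \<le> real (j + k) / (2 * real n)"
      using np assms by (intro divide_right_mono) auto
    show "real (j + k) / (2 * real n) \<le> real (k + l) / (2 * real n)"
      using np assms by (intro divide_right_mono) auto
    show "real (k + l) / (2 * real n) \<le> 1" using np assms by (simp add: field_simps)
    show "real (i + j) / (2 * real n) + real (k + l) / (2 * real n) =
      real (i + l) / (2 * real n) + real (j + k) / (2 * real n)"
      unfolding add_divide_distrib[symmetric] by simp
  qed
qed

definition cp :: "nat \<Rightarrow> real \<Rightarrow> real \<Rightarrow> nat \<Rightarrow> nat \<Rightarrow> real" where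
  "cp n x y i k = (if i \<le> k then real (n choose k) * real (k choose i) * x^i * (y-x)^(k-i) * (1-y)^(n-k) else 0)"

lemma cp_m2:
  assumes "k \<le> n"
  shows "(\<Sum>i\<le>n. cp n x y i k) = bern n k y"
proof -
  have "(\<Sum>i\<le>n. cp n x y i k) = (\<Sum>i\<le>k. cp n x y i k)"
    using assms by (intro sum.mono_neutral_right) (auto simp: cp_def)
  also have "\<dots> = (\<Sum>i\<le>k. real (n choose k) * (1-y)^(n-k) * (real (k choose i) * x^i * (y-x)^(k-i)))"
    by (intro sum.cong refl) (simp add: cp_def)
  also have "\<dots> = real (n choose k) * (1-y)^(n-k) * y^k"
    using binomial_ring[of x "y-x" k] by (simp add: sum_distrib_left)
  also have "\<dots> = bern n k y" by (simp add: bern_def)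
  finally show ?thesis .
qed

lemma cp_m1:
  assumes "i \<le> n"
  shows "(\<Sum>k\<le>n. cp n x y i k) = bern n i x"
proof -
  have "(\<Sum>k\<le>n. cp n x y i k) = (\<Sum>k\<in>{i..n}. cp n x y i k)"
    using assms by (intro sum.mono_neutral_right) (auto simp: cp_def)
  also have "\<dots> = (\<Sum>k\<in>{i..n}. real (n choose i) * x^i * (real ((n-i) choose (k-i)) * (y-x)^(k-i) * (1-y)^((n-i)-(k-i))))"
  proof (intro sum.cong refl)
    fix k assume k: "k \<in> {i..n}"
    have "real (n choose k) * real (k choose i) = real (n choose i) * real ((n-i) choose (k-i))"
      using choose_mult[of i k n] k by (simp flip: of_nat_mult)
    moreover have "n - k = (n-i) - (k-i)" using k by auto
    ultimately show "cp n x y i k = real (n choose i) * x^i * (real ((n-i) choose (k-i)) * (y-x)^(k-i) * (1-y)^((n-i)-(k-i)))"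
      using k by (simp add: cp_def algebra_simps)
  qed
  also have "\<dots> = (\<Sum>m\<in>{0..n-i}. real (n choose i) * x^i * (real ((n-i) choose m) * (y-x)^m * (1-y)^((n-i)-m)))"
  proof -
    have "{i..n} = (\<lambda>m. m + i) ` {0..n-i}" using assms
      by (auto simp: image_iff intro!: bexI[where x="_ - i"])
    then show ?thesis
      by (intro sum.reindex_cong[where l="\<lambda>m. m+i"]) (auto simp: inj_on_def)
  qed
  also have "\<dots> = real (n choose i) * x^i * (1 - x)^(n-i)"
    using binomial_ring[of "y-x" "1-y" "n-i"] by (simp add: sum_distrib_left atLeast0AtMost)
  also have "\<dots> = bern n i x" by (simp add: bern_def)
  finally show ?thesis .
qed

lemma main_le:
  fixes n :: nat and f :: "real \<Rightarrow> real" and x y :: real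
  assumes cv: "convex_on {0..1} f" and xy: "0 \<le> x" "x \<le> y" "y \<le> 1"
  shows "(\<Sum>i\<le>n. \<Sum>j\<le>n.
           (bern n i x * bern n j x + bern n i y * bern n j y - 2 * bern n i x * bern n j y)
             * f (real (i + j) / (2 * real n))) \<ge> 0"
proof -
  define g where "g t = f (real t / (2 * real n))" for t :: nat
  have pnn: "cp n x y i k \<ge> 0" for i k using xy by (simp add: cp_def)
  have eq: "(\<Sum>i\<le>n. \<Sum>j\<le>n.
           (bern n i x * bern n j x + bern n i y * bern n j y - 2 * bern n i x * bern n j y) * g (i + j))
    = (\<Sum>i\<le>n. \<Sum>k\<le>n. \<Sum>j\<le>n. \<Sum>l\<le>n. cp n x y i k * cp n x y j l * (g (i+j) + g (k+l) - g (i+l) - g (j+k)))"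
    by (rule coupling_sum) (auto simp: cp_m1 cp_m2)
  have "(\<Sum>i\<le>n. \<Sum>k\<le>n. \<Sum>j\<le>n. \<Sum>l\<le>n. cp n x y i k * cp n x y j l * (g (i+j) + g (k+l) - g (i+l) - g (j+k))) \<ge> 0"
  proof (intro sum_nonneg)
    fix i k j l assume "i \<in> {..n}" "k \<in> {..n}" "j \<in> {..n}" "l \<in> {..n}"
    then have b: "i \<le> n" "k \<le> n" "j \<le> n" "l \<le> n" by auto
    show "cp n x y i k * cp n x y j l * (g (i+j) + g (k+l) - g (i+l) - g (j+k)) \<ge> 0"
    proof (cases "i \<le> k \<and> j \<le> l")
      case True
      then have "g (i+l) + g (j+k) \<le> g (i+j) + g (k+l)"
        unfolding g_def using g_four[OF cv, of i k n j l] b by auto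
      then show ?thesis using pnn[of i k] pnn[of j l] by (intro mult_nonneg_nonneg) auto
    next
      case False
      then show ?thesis by (auto simp: cp_def)
    qed
  qed
  then show ?thesis using eq unfolding g_def by simp
qed

theorem theorem3:
  fixes n :: nat and f :: "real \<Rightarrow> real" and x y :: real
  assumes "convex_on {0..1} f" and "continuous_on {0..1} f"
    and "x \<in> {0..1}" and "y \<in> {0..1}"
  shows "(\<Sum>i\<le>n. \<Sum>j\<le>n.
           (bern n i x * bern n j x + bern n i y * bern n j y - 2 * bern n i x * bern n j y)
             * f (real (i + j) / (2 * real n))) \<ge> 0"
proof (cases "x \<le> y")
  case True
  then show ?thesis using main_le[OF assms(1)] assms by auto
next
  case False
  let ?g = "\<lambda>i j. f (real (i + j) / (2 * real n))"
  have sym: "(\<Sum>i\<le>n. \<Sum>j\<le>n.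
           (bern n i x * bern n j x + bern n i y * bern n j y - 2 * bern n i x * bern n j y) * ?g i j)
     = (\<Sum>i\<le>n. \<Sum>j\<le>n.
           (bern n i y * bern n j y + bern n i x * bern n j x - 2 * bern n i y * bern n j x) * ?g i j)"
  proof -
    have c: "(\<Sum>i\<le>n. \<Sum>j\<le>n. bern n i x * bern n j y * ?g i j)
       = (\<Sum>i\<le>n. \<Sum>j\<le>n. bern n i y * bern n j x * ?g i j)"
      by (subst sum.swap) (simp add: add.commute mult.commute)
    have c2: "(\<Sum>i\<le>n. \<Sum>j\<le>n. 2 * (bern n i y * (bern n j x * f ((real i + real j) / (real n * 2)))))
       = (\<Sum>i\<le>n. \<Sum>j\<le>n. 2 * (bern n i x * (bern n j y * f ((real i + real j) / (real n * 2)))))"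
      by (subst sum.swap) (simp add: add.commute mult.commute mult.left_commute)
    show ?thesis
      apply (simp add: algebra_simps sum.distrib sum_subtractf sum_distrib_left)
      using c2 by simp
  qed
  show ?thesis unfolding sym using main_le[OF assms(1), of y x n] False assms by auto
qed

end
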